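(* Let $d\ge1$, $m\in\mathbb{N}$ ($m\ge1$), and let $A_0,A_1\in\mathbb{R}^{d\times d}$ be constant matrices with $A_0A_1\ne A_1A_0$. Let $Z:\mathbb{Z}\to\mathbb{R}^{d\times d}$ be the discrete function defined in the context. Then $Z$ is the unique solution of the initial value problem \[ \Delta X(u)=A_0X(u-m)+X(u-m)A_1,\ \ u\in\mathbb{Z}_0^{\infty},\qquad X(u)=I,\ \ u\in\mathbb{Z}_{-m}^{0}. \] In particular, \[ \Delta Z(u)=A_0Z(u-m)+Z(u-m)A_1\qquad\text{for all }u\in\mathbb{Z}_{-m}^{\infty}. \]
   Context: $\Theta$ and $I$ denote the $d\times d$ zero and identity matrices; $\mathbb{Z}_a^b=\{a,a+1,\dots,b\}$ (with $\mathbb{Z}_a^\infty=\{a,a+1,\dots\}$ and $\mathbb{Z}_{-\infty}^b=\{\dots,b-1,b\}$); $\Delta X(u)=X(u+1)-X(u)$. For integers $a$ and $r\ge0$, $\binom{a}{r}=a(a-1)\cdots(a-r+1)/r!$. Define matrices $Q_{r+1}(rm)$, $r=0,1,2,\dots$, by $Q_1(0)=I$ and $Q_{r+1}(rm)=A_0Q_r((r-1)m)+Q_r((r-1)m)A_1$ for $r\ge1$. Define $Z(u)=\Theta$ for $u\in\mathbb{Z}_{-\infty}^{-m-1}$, $Z(u)=I$ for $u\in\mathbb{Z}_{-m}^{0}$, and for each integer $n\ge1$ and $u\in\mathbb{Z}_{(n-1)(m+1)+1}^{n(m+1)}$, \[ Z(u)=\sum_{r=0}^{n}\binom{u-(r-1)m}{r}Q_{r+1}(rm).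 \] *)

theory Defs
  imports "HOL-Analysis.Analysis"
begin

text \<open>d x d real matrices are rendered as real^'d^'d (d = CARD('d) \<ge> 1).
  QQ A0 A1 r denotes the paper's Q_{r+1}(rm).\<close>

fun QQ :: "real^'d^'d \<Rightarrow> real^'d^'d \<Rightarrow> nat \<Rightarrow> real^'d^'d" where
  "QQ A0 A1 0 = mat 1"
| "QQ A0 A1 (Suc r) = A0 ** QQ A0 A1 r + QQ A0 A1 r ** A1"

definition ibinom :: "int \<Rightarrow> nat \<Rightarrow> real" where
  "ibinom a r = (real_of_int a) gchoose r"

text \<open>The discrete function Z. For u \<ge> 1, n is the unique n \<ge> 1 with
  (n-1)(m+1)+1 \<le> u \<le> n(m+1), i.e. n = (u-1) div (m+1) + 1.\<close>
definition ZZ :: "real^'d^'d \<Rightarrow> real^'d^'d \<Rightarrow> nat \<Rightarrow> int \<Rightarrow> real^'d^'d" where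
  "ZZ A0 A1 m u =
     (if u < - int m then 0
      else if u \<le> 0 then mat 1
      else (let n = nat ((u - 1) div (int m + 1) + 1)
            in \<Sum>r\<in>{0..n}. ibinom (u - (int r - 1) * int m) r *\<^sub>R QQ A0 A1 r))"

definition fwd_diff :: "(int \<Rightarrow> 'a::ab_group_add) \<Rightarrow> int \<Rightarrow> 'a" where
  "fwd_diff X u = X (u + 1) - X u"

definition solves_ivp :: "real^'d^'d \<Rightarrow> real^'d^'d \<Rightarrow> nat \<Rightarrow> (int \<Rightarrow> real^'d^'d) \<Rightarrow> bool" where
  "solves_ivp A0 A1 m X \<longleftrightarrow>
     (\<forall>u\<ge>0. fwd_diff X u = A0 ** X (u - int m) + X (u - int m) ** A1) \<and>
     (\<forall>u. - int m \<le> u \<and> u \<le> 0 \<longrightarrow> X u = mat 1)"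

end

theory Submission imports Defs begin
lemma mm_scaleR_r: "(A::real^'n^'m) ** (c *\<^sub>R (B::real^'p^'n)) = c *\<^sub>R (A ** B)"
  by (simp add: matrix_matrix_mult_def vec_eq_iff sum_distrib_left algebra_simps)
lemma mm_scaleR_l: "(c *\<^sub>R (A::real^'n^'m)) ** (B::real^'p^'n) = c *\<^sub>R (A ** B)"
  by (simp add: matrix_matrix_mult_def vec_eq_iff sum_distrib_left algebra_simps)
lemma mm_add_r: "((A::real^'n^'m) + B) ** (C::real^'p^'n) = A ** C + B ** C"
  by (simp add: matrix_matrix_mult_def vec_eq_iff sum.distrib algebra_simps)
lemma mm_sum_r: "(A::real^'n^'m) ** (\<Sum>i\<in>S. f i :: real^'p^'n) = (\<Sum>i\<in>S. A ** f i)"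
  by (induction S rule: infinite_finite_induct) (auto simp: matrix_add_ldistrib)
lemma mm_sum_l: "(\<Sum>i\<in>S. f i :: real^'n^'m) ** (B::real^'p^'n) = (\<Sum>i\<in>S. f i ** B)"
  by (induction S rule: infinite_finite_induct) (auto simp: mm_add_r)

definition WW :: "real^'d^'d \<Rightarrow> real^'d^'d \<Rightarrow> nat \<Rightarrow> nat \<Rightarrow> real^'d^'d" where
  "WW A0 A1 m k = (\<Sum>r\<le>k. real ((k - r*m) choose r) *\<^sub>R QQ A0 A1 r)"

lemma WW_ext: assumes "k \<le> N"
  shows "WW A0 A1 m k = (\<Sum>r\<le>N. real ((k - r*m) choose r) *\<^sub>R QQ A0 A1 r)"
proof -
  have "(\<Sum>r\<le>N. real ((k - r*m) choose r) *\<^sub>R QQ A0 A1 r)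
      = (\<Sum>r\<in>{..k}. real ((k - r*m) choose r) *\<^sub>R QQ A0 A1 r)"
    by (rule sum.mono_neutral_right) (use assms in auto)
  then show ?thesis by (simp add: WW_def)
qed

lemma D_id:
  "real ((k + 1 - (s+1)*m) choose (s+1)) - real ((k - (s+1)*m) choose (s+1))
   = (if m \<le> k then real ((k - m - s*m) choose s) else 0)"
proof (cases "(s+1)*m \<le> k")
  case True
  then have e: "k + 1 - (s+1)*m = Suc (k - (s+1)*m)" "k - m - s*m = k - (s+1)*m" by auto
  have "m \<le> k" using True by (simp add: algebra_simps)
  then show ?thesis unfolding e by (simp add: binomial_Suc_Suc)
next
  case False
  then have e: "k + 1 - (s+1)*m = 0" "k - (s+1)*m = 0" by auto
  show ?thesis
  proof (cases "m \<le> k")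
    case True
    then have "s \<noteq> 0" using False by (cases s) auto
    moreover have "k - m - s*m = 0" using False by (simp add: algebra_simps)
    ultimately show ?thesis unfolding e by simp
  qed (simp add: e)
qed

lemma WW_step:
  "WW A0 A1 m (Suc k) - WW A0 A1 m k
   = (if m \<le> k then A0 ** WW A0 A1 m (k - m) + WW A0 A1 m (k - m) ** A1 else 0)"
proof -
  let ?Q = "QQ A0 A1"
  have "WW A0 A1 m (Suc k) - WW A0 A1 m k =
     (\<Sum>r\<le>Suc k. (real ((Suc k - r*m) choose r) - real ((k - r*m) choose r)) *\<^sub>R ?Q r)"
    by (simp add: WW_ext[of k "Suc k"] WW_def[of _ _ _ "Suc k"] sum_subtractf[symmetric] scaleR_diff_left
         del: sum.atMost_Suc)
  also have "\<dots> = (\<Sum>s\<le>k. (real ((k + 1 - (s+1)*m) choose (s+1)) - real ((k - (s+1)*m) choose (s+1))) *\<^sub>R ?Q (Suc s))"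
    by (subst sum.atMost_Suc_shift) simp
  also have "\<dots> = (\<Sum>s\<le>k. (if m \<le> k then real ((k - m - s*m) choose s) else 0) *\<^sub>R ?Q (Suc s))"
    by (simp only: D_id)
  also have "\<dots> = (if m \<le> k then A0 ** WW A0 A1 m (k - m) + WW A0 A1 m (k - m) ** A1 else 0)"
  proof (cases "m \<le> k")
    case True
    have "A0 ** WW A0 A1 m (k - m) + WW A0 A1 m (k - m) ** A1
       = (\<Sum>s\<le>k. real ((k - m - s*m) choose s) *\<^sub>R ?Q (Suc s))"
      by (simp add: WW_ext[of "k-m" k] mm_sum_r mm_sum_l mm_scaleR_r mm_scaleR_l
            sum.distrib[symmetric] scaleR_add_right)
    then show ?thesis using True by simp
  qed simp
  finally show ?thesis .
qed


lemma binom_zero: "k < r*(m+1) \<Longrightarrow> (k - r*m) choose r = 0"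
proof -
  assume a: "k < r*(m+1)"
  have "k < r*m + r" using a by (simp add: algebra_simps)
  moreover have "r > 0" using a by (metis gr0I mult_0 not_less0)
  ultimately have "k - r*m < r" by linarith
  then show ?thesis by (rule binomial_eq_0)
qed

lemma WW_N: assumes "\<And>r. r*(m+1) \<le> k \<Longrightarrow> r \<le> N"
  shows "WW A0 A1 m k = (\<Sum>r\<le>N. real ((k - r*m) choose r) *\<^sub>R QQ A0 A1 r)"
proof -
  have "(\<Sum>r\<le>max N k. real ((k - r*m) choose r) *\<^sub>R QQ A0 A1 r)
      = (\<Sum>r\<in>{..N}. real ((k - r*m) choose r) *\<^sub>R QQ A0 A1 r)"
  proof (rule sum.mono_neutral_right)
    show "\<forall>i\<in>{..max N k} - {..N}. real ((k - i * m) choose i) *\<^sub>R QQ A0 A1 i = 0"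
    proof
      fix i assume "i \<in> {..max N k} - {..N}"
      then have "\<not> i*(m+1) \<le> k" using assms by auto
      then show "real ((k - i * m) choose i) *\<^sub>R QQ A0 A1 i = 0" using binom_zero[of k i m] by simp
    qed
  qed auto
  moreover have "WW A0 A1 m k = (\<Sum>r\<le>max N k. real ((k - r*m) choose r) *\<^sub>R QQ A0 A1 r)"
    by (rule WW_ext) simp
  ultimately show ?thesis by simp
qed

lemma div_fact:
  fixes u :: int and m r :: nat
  assumes "u > 0"
  shows "(int r \<le> (u - 1) div (int m + 1) + 1) \<longleftrightarrow> int r * (int m + 1) \<le> u + int m"
proof -
  define q where "q = (u - 1) div (int m + 1)"
  define t where "t = (u - 1) mod (int m + 1)"
  have u: "u - 1 = q * (int m + 1) + t" using div_mult_mod_eq[of "u-1" "int m + 1"] by (simp add: q_def t_def)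
  have t: "0 \<le> t" "t \<le> int m" unfolding t_def by (simp_all add: pos_mod_bound[THEN less_imp_le] add1_zle_eq[symmetric])
    (smt (verit) Euclidean_Rings.pos_mod_bound of_nat_0_le_iff)
  have "int r \<le> q + 1 \<longleftrightarrow> int r * (int m + 1) \<le> u + int m"
  proof
    assume "int r \<le> q + 1"
    then have "int r * (int m + 1) \<le> (q+1) * (int m + 1)" by (simp add: mult_right_mono)
    then show "int r * (int m + 1) \<le> u + int m" using u t by (simp add: algebra_simps)
  next
    assume h: "int r * (int m + 1) \<le> u + int m"
    have "u + int m < (q + 2) * (int m + 1)" using u t by (simp add: algebra_simps)
    then have "int r * (int m + 1) < (q + 2) * (int m + 1)" using h by linarith
    then have "int r < q + 2" by (simp add: mult_less_cancel_right)
    then show "int r \<le> q + 1" by linarith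
  qed
  then show ?thesis by (simp add: q_def)
qed

lemma ZZ_eq:
  assumes m: "m \<ge> 1" and u: "u \<ge> - int m"
  shows "ZZ A0 A1 m u = WW A0 A1 m (nat (u + int m))"
proof (cases "u \<le> 0")
  case True
  define k where "k = nat (u + int m)"
  have km: "k \<le> m" using True u by (simp add: k_def)
  have "WW A0 A1 m k = (\<Sum>r\<le>0. real ((k - r*m) choose r) *\<^sub>R QQ A0 A1 r)"
  proof (rule WW_N)
    fix r assume "r*(m+1) \<le> k"
    then show "r \<le> 0" using km m by (cases r) auto
  qed
  then show ?thesis using True u by (simp add: ZZ_def k_def)
next
  case False
  define k where "k = nat (u + int m)"
  define n where "n = nat ((u - 1) div (int m + 1) + 1)"
  have n0: "(u - 1) div (int m + 1) + 1 \<ge> 0" using False by (simp add: pos_imp_zdiv_nonneg_iff)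
  have rn: "r \<le> n \<longleftrightarrow> r*(m+1) \<le> k" for r
  proof -
    have "r \<le> n \<longleftrightarrow> int r \<le> (u - 1) div (int m + 1) + 1" unfolding n_def using n0 by linarith
    also have "\<dots> \<longleftrightarrow> int r * (int m + 1) \<le> u + int m" by (rule div_fact[where u=u and m=m and r=r]) (use False in simp)
    also have "\<dots> \<longleftrightarrow> int (r*(m+1)) \<le> int k" unfolding k_def using u by (simp add: algebra_simps)
    also have "\<dots> \<longleftrightarrow> r*(m+1) \<le> k" by (rule of_nat_le_iff)
    finally show ?thesis .
  qed
  have "ZZ A0 A1 m u = (\<Sum>r\<in>{0..n}. ibinom (u - (int r - 1) * int m) r *\<^sub>R QQ A0 A1 r)"
    using False u by (simp add: ZZ_def n_def Let_def)
  also have "\<dots> = (\<Sum>r\<le>n. real ((k - r*m) choose r) *\<^sub>R QQ A0 A1 r)"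
  proof (rule sum.cong)
    fix r assume "r \<in> {..n}"
    then have "r*(m+1) \<le> k" using rn by simp
    then have "u - (int r - 1) * int m = int (k - r*m)"
      using False u unfolding k_def by (simp add: algebra_simps of_nat_diff) linarith?
    then show "ibinom (u - (int r - 1) * int m) r *\<^sub>R QQ A0 A1 r = real ((k - r*m) choose r) *\<^sub>R QQ A0 A1 r"
      by (simp add: ibinom_def binomial_gbinomial)
  qed auto
  also have "\<dots> = WW A0 A1 m k" by (rule WW_N[symmetric]) (simp add: rn)
  finally show ?thesis by (simp add: k_def)
qed

theorem theorem3:
  fixes A0 A1 :: "real^'d^'d" and m :: nat
  assumes "m \<ge> 1" and "A0 ** A1 \<noteq> A1 ** A0"
  shows "solves_ivp A0 A1 m (ZZ A0 A1 m)
       \<and> (\<forall>X. solves_ivp A0 A1 m X \<longrightarrow> (\<forall>u\<ge>- int m. X u = ZZ A0 A1 m u))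
       \<and> (\<forall>u\<ge>- int m. fwd_diff (ZZ A0 A1 m) u
              = A0 ** ZZ A0 A1 m (u - int m) + ZZ A0 A1 m (u - int m) ** A1)"
proof -
  let ?Z = "ZZ A0 A1 m"
  have fd: "fwd_diff ?Z u = A0 ** ?Z (u - int m) + ?Z (u - int m) ** A1" if u: "u \<ge> - int m" for u
  proof -
    define k where "k = nat (u + int m)"
    have z1: "?Z (u+1) = WW A0 A1 m (Suc k)"
    proof -
      have "nat (u + 1 + int m) = Suc k" using u by (simp add: k_def)
      then show ?thesis using ZZ_eq[OF assms(1), of "u+1"] u by simp
    qed
    have z0: "?Z u = WW A0 A1 m k" using ZZ_eq[OF assms(1) u] by (simp add: k_def)
    show ?thesis
    proof (cases "u \<ge> 0")
      case True
      have "nat (u - int m + int m) = k - m" using True by (simp add: k_def)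
      then have "?Z (u - int m) = WW A0 A1 m (k - m)" using ZZ_eq[OF assms(1), of "u - int m"] True
        by simp
      moreover have "m \<le> k" using True by (simp add: k_def)
      ultimately show ?thesis using WW_step[of A0 A1 m k] z1 z0 by (simp add: fwd_diff_def)
    next
      case False
      have "?Z (u - int m) = 0" using False by (simp add: ZZ_def)
      moreover have "int k < int m" using False u by (simp add: k_def)
      then have "\<not> m \<le> k" by simp
      ultimately show ?thesis using WW_step[of A0 A1 m k] z1 z0 by (simp add: fwd_diff_def)
    qed
  qed
  have ivp: "solves_ivp A0 A1 m ?Z"
    unfolding solves_ivp_def
  proof (intro conjI allI impI)
    fix u :: int assume "u \<ge> 0" then show "fwd_diff ?Z u = A0 ** ?Z (u - int m) + ?Z (u - int m) ** A1"
      by (intro fd) simp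
  next
    fix u :: int assume "- int m \<le> u \<and> u \<le> 0" then show "?Z u = mat 1" by (simp add: ZZ_def)
  qed
  have uniq: "X u = ?Z u" if X: "solves_ivp A0 A1 m X" and u: "u \<ge> - int m" for X u
  proof -
    have "\<forall>u. nat (u + int m) = j \<and> u \<ge> - int m \<longrightarrow> X u = ?Z u" for j
    proof (induction j rule: less_induct)
      case (less j)
      show ?case
      proof (intro allI impI)
        fix u assume h: "nat (u + int m) = j \<and> u \<ge> - int m"
        show "X u = ?Z u"
        proof (cases "u \<le> 0")
          case True
          then show ?thesis using X h by (simp add: solves_ivp_def ZZ_def)
        next
          case False
          have l1: "nat (u - 1 + int m) < j" using h False by linarith
          have l2: "nat (u - 1 - int m + int m) < j" using h False by linarith
          have e1: "X (u - 1) = ?Z (u - 1)" using less[OF l1] h False by simp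
          have e2: "X (u - 1 - int m) = ?Z (u - 1 - int m)"
            using less[OF l2] h False by simp
          have "fwd_diff X (u - 1) = A0 ** X (u - 1 - int m) + X (u - 1 - int m) ** A1"
            using X False unfolding solves_ivp_def by simp
          then have "X u = X (u - 1) + (A0 ** X (u - 1 - int m) + X (u - 1 - int m) ** A1)"
            unfolding fwd_diff_def by (simp add: algebra_simps)
          moreover have "fwd_diff ?Z (u - 1) = A0 ** ?Z (u - 1 - int m) + ?Z (u - 1 - int m) ** A1"
            using fd[of "u - 1"] False h by simp
          then have "?Z u = ?Z (u - 1) + (A0 ** ?Z (u - 1 - int m) + ?Z (u - 1 - int m) ** A1)"
            unfolding fwd_diff_def by (simp add: algebra_simps)
          ultimately show ?thesis using e1 e2 by simp
        qed
      qed
    qed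
    then show ?thesis using u by blast
  qed
  show ?thesis using ivp uniq fd by blast
qed

end
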